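(* Let $A$ be an instance and $K\in\{\mathbb{B},\mathbb{N}\}$. Then $[A]_{\leftrightarrow}$ admits a left query algorithm over $K$ if and only if $\mathrm{CSP}(A)$ admits a left query algorithm over $K$.
   Context: A schema is a finite set of relation symbols, each with a positive arity. An instance $A$ over a schema $\sigma$ assigns to each $R\in\sigma$ of arity $r$ a finite $r$-ary relation $R^A$; $\mathrm{adom}(A)$ is the set of elements occurring in its facts. A homomorphism $h:A\to B$ is a map $h:\mathrm{adom}(A)\to\mathrm{adom}(B)$ preserving every relation; we write $A\to B$ if one exists. $A,B$ are homomorphically equivalent if $A\to B$ and $B\to A$; $[A]_{\leftrightarrow}$ is the class of all instances homomorphically equivalent to $A$. $\mathrm{CSP}(B)=\{A: A\to B\}$. $\hom_{\mathbb{N}}(A,B)$ is the number of homomorphisms $A\to B$; $\hom_{\mathbb{B}}(A,B)=1$ if $A\to B$ and $0$ otherwise. For $\mathcal{F}=\{F_1,\dots,F_k\}$, $\hom_K(\mathcal{F},A)=(\hom_K(F_i,A))_{i\le k}$. A left $k$-query algorithm over $K$ for a class $\mathcal{C}$ (closed under isomorphism) is a pair $(\mathcal{F},X)$ with $|\mathcal{F}|=k$ and $X$ a set of $k$-tuples over $K$ (no effectiveness required) such that for every instance $D$: $D\in\mathcal{C}$ iff $\hom_K(\mathcal{F},D)\in X$; $\mathcal{C}$ admits one if one exists for some $k>0$. *)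

theory Defs
  imports Main "HOL-Library.FuncSet"
begin

text \<open>Instances have elements of type nat (any countably infinite supply of elements suffices,
  since instances are finite); an instance assigns to each symbol a finite set of tuples
  (lists) of the right length, and the empty relation to symbols outside the schema.\<close>

definition schema :: "'r set \<Rightarrow> ('r \<Rightarrow> nat) \<Rightarrow> bool" where
  "schema S ar \<longleftrightarrow> finite S \<and> (\<forall>R\<in>S. 0 < ar R)"

type_synonym 'r inst = "'r \<Rightarrow> nat list set"

definition is_instance :: "'r set \<Rightarrow> ('r \<Rightarrow> nat) \<Rightarrow> 'r inst \<Rightarrow> bool" where
  "is_instance S ar A \<longleftrightarrow>
     (\<forall>R. finite (A R)) \<and> (\<forall>R. R \<notin> S \<longrightarrow> A R = {}) \<and>
     (\<forall>R\<in>S. \<forall>t\<in>A R. length t = ar R)"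

definition adom :: "'r set \<Rightarrow> 'r inst \<Rightarrow> nat set" where
  "adom S A = (\<Union>R\<in>S. \<Union>t\<in>A R. set t)"

text \<open>Homomorphisms as maps adom A \<rightarrow> adom B (extensional, so they can be counted).\<close>
definition homs :: "'r set \<Rightarrow> 'r inst \<Rightarrow> 'r inst \<Rightarrow> (nat \<Rightarrow> nat) set" where
  "homs S A B = {h \<in> adom S A \<rightarrow>\<^sub>E adom S B. \<forall>R\<in>S. \<forall>t\<in>A R. map h t \<in> B R}"

definition hom_exists :: "'r set \<Rightarrow> 'r inst \<Rightarrow> 'r inst \<Rightarrow> bool" where
  "hom_exists S A B \<longleftrightarrow> homs S A B \<noteq> {}"

definition hom_equiv_class :: "'r set \<Rightarrow> ('r \<Rightarrow> nat) \<Rightarrow> 'r inst \<Rightarrow> 'r inst set" where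
  "hom_equiv_class S ar A = {D. is_instance S ar D \<and> hom_exists S D A \<and> hom_exists S A D}"

definition CSP :: "'r set \<Rightarrow> ('r \<Rightarrow> nat) \<Rightarrow> 'r inst \<Rightarrow> 'r inst set" where
  "CSP S ar A = {D. is_instance S ar D \<and> hom_exists S D A}"

datatype semiringK = KB | KN

definition hom_K :: "semiringK \<Rightarrow> 'r set \<Rightarrow> 'r inst \<Rightarrow> 'r inst \<Rightarrow> nat" where
  "hom_K K S F D = (case K of KN \<Rightarrow> card (homs S F D)
                             | KB \<Rightarrow> (if hom_exists S F D then 1 else 0))"

definition hom_K_vec :: "semiringK \<Rightarrow> 'r set \<Rightarrow> 'r inst list \<Rightarrow> 'r inst \<Rightarrow> nat list" where
  "hom_K_vec K S Fs D = map (\<lambda>F. hom_K K S F D) Fs"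

definition left_query_algorithm ::
  "'r set \<Rightarrow> ('r \<Rightarrow> nat) \<Rightarrow> semiringK \<Rightarrow> 'r inst set \<Rightarrow> nat \<Rightarrow> 'r inst list \<Rightarrow> nat list set \<Rightarrow> bool" where
  "left_query_algorithm S ar K C k Fs X \<longleftrightarrow>
     length Fs = k \<and> distinct Fs \<and> (\<forall>F\<in>set Fs. is_instance S ar F) \<and>
     (\<forall>x\<in>X. length x = k) \<and>
     (\<forall>D. is_instance S ar D \<longrightarrow> (D \<in> C \<longleftrightarrow> hom_K_vec K S Fs D \<in> X))"

definition admits_left_qa :: "'r set \<Rightarrow> ('r \<Rightarrow> nat) \<Rightarrow> semiringK \<Rightarrow> 'r inst set \<Rightarrow> bool" where
  "admits_left_qa S ar K C \<longleftrightarrow> (\<exists>k>0. \<exists>Fs X. left_query_algorithm S ar K C k Fs X)"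

end

theory Submission
  imports Defs
begin

lemma hom_exists_iff:
  "hom_exists S F G \<longleftrightarrow> (\<exists>f. \<forall>R\<in>S. \<forall>t\<in>F R. map f t \<in> G R)"
proof
  assume "hom_exists S F G"
  then obtain h where "h \<in> homs S F G" unfolding hom_exists_def by blast
  then show "\<exists>f. \<forall>R\<in>S. \<forall>t\<in>F R. map f t \<in> G R" unfolding homs_def by blast
next
  assume "\<exists>f. \<forall>R\<in>S. \<forall>t\<in>F R. map f t \<in> G R"
  then obtain f where f: "\<forall>R\<in>S. \<forall>t\<in>F R. map f t \<in> G R" by blast
  have m: "map (restrict f (adom S F)) t = map f t" if "R \<in> S" "t \<in> F R" for R t
    using that by (auto simp: adom_def)
  have "restrict f (adom S F) \<in> homs S F G"
    unfolding homs_def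
  proof (intro CollectI conjI ballI)
    show "restrict f (adom S F) \<in> adom S F \<rightarrow>\<^sub>E adom S G"
    proof
      fix x assume "x \<in> adom S F"
      then obtain R t where "R \<in> S" "t \<in> F R" "x \<in> set t" by (auto simp: adom_def)
      then show "restrict f (adom S F) x \<in> adom S G"
        using f \<open>x \<in> adom S F\<close> by (force simp: adom_def)
    qed auto
  next
    fix R t assume "R \<in> S" "t \<in> F R"
    then show "map (restrict f (adom S F)) t \<in> G R" using m[of R t] f by metis
  qed
  then show "hom_exists S F G" unfolding hom_exists_def by blast
qed

lemma finite_adom: "schema S ar \<Longrightarrow> is_instance S ar F \<Longrightarrow> finite (adom S F)"
  by (auto simp: schema_def is_instance_def adom_def)

lemma finite_homs: "finite (adom S F) \<Longrightarrow> finite (adom S G) \<Longrightarrow> finite (homs S F G)"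
  unfolding homs_def by (rule finite_subset[OF _ finite_PiE[of "adom S F" "\<lambda>_. adom S G"]]) auto

lemma hom_K_nz:
  assumes "finite (homs S F D)"
  shows "hom_K K S F D \<noteq> 0 \<longleftrightarrow> hom_exists S F D"
  using assms by (cases K) (auto simp: hom_K_def hom_exists_def)

definition restr :: "'r inst \<Rightarrow> nat set \<Rightarrow> 'r inst" where
  "restr F P = (\<lambda>R. {t\<in>F R. set t \<subseteq> P})"

definition validP :: "'r set \<Rightarrow> 'r inst \<Rightarrow> nat set \<Rightarrow> bool" where
  "validP S F P \<longleftrightarrow> P \<subseteq> adom S F \<and> (\<forall>R\<in>S. \<forall>t\<in>F R. set t \<subseteq> P \<or> set t \<subseteq> adom S F - P)"

definition dunion :: "'r inst \<Rightarrow> 'r inst \<Rightarrow> 'r inst" where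
  "dunion D A = (\<lambda>R. map (\<lambda>x. 2*x) ` D R \<union> map (\<lambda>x. 2*x+1) ` A R)"

definition combine :: "'r set \<Rightarrow> 'r inst \<Rightarrow> nat set \<Rightarrow> (nat \<Rightarrow> nat) \<Rightarrow> (nat \<Rightarrow> nat) \<Rightarrow> nat \<Rightarrow> nat" where
  "combine S F P h1 h2 = (\<lambda>x. if x \<in> P then 2 * h1 x else if x \<in> adom S F then 2 * h2 x + 1 else undefined)"

lemma validP_compl: "validP S F P \<Longrightarrow> validP S F (adom S F - P)"
  unfolding validP_def by blast

lemma adom_restr: "validP S F P \<Longrightarrow> adom S (restr F P) = P"
  unfolding validP_def adom_def restr_def by blast

lemma adom_dunion: "adom S (dunion D A) = (\<lambda>x. 2*x) ` adom S D \<union> (\<lambda>x. 2*x+1) ` adom S A"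
  unfolding adom_def dunion_def by (simp add: image_Un image_UN UN_Un_distrib image_image)

lemma restr_inst: "is_instance S ar F \<Longrightarrow> is_instance S ar (restr F P)"
  unfolding is_instance_def restr_def by auto

lemma dunion_inst: "is_instance S ar D \<Longrightarrow> is_instance S ar A \<Longrightarrow> is_instance S ar (dunion D A)"
  unfolding is_instance_def dunion_def by auto

lemma nonempty_facts: "schema S ar \<Longrightarrow> is_instance S ar F \<Longrightarrow> R \<in> S \<Longrightarrow> t \<in> F R \<Longrightarrow> t \<noteq> []"
  unfolding schema_def is_instance_def by fastforce

lemma map_eq_double: "map h t = map (\<lambda>x. 2*x) s \<Longrightarrow> x \<in> set t \<Longrightarrow> even (h x)"
proof -
  assume e: "map h t = map (\<lambda>x. 2*x) s" and x: "x \<in> set t"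
  have "h x \<in> set (map h t)" using x by simp
  then have "h x \<in> (\<lambda>x. 2*x) ` set s" unfolding e by simp
  then show "even (h x)" by auto
qed

lemma map_eq_odd: "map h t = map (\<lambda>x. 2*x+1) s \<Longrightarrow> x \<in> set t \<Longrightarrow> odd (h x)"
proof -
  assume e: "map h t = map (\<lambda>x. 2*x+1) s" and x: "x \<in> set t"
  have "h x \<in> set (map h t)" using x by simp
  then have "h x \<in> (\<lambda>x. 2*x+1) ` set s" unfolding e by simp
  then show "odd (h x)" by auto
qed

lemma homs_dunion_sub:
  assumes ne: "\<forall>R\<in>S. \<forall>t\<in>F R. t \<noteq> []" and h: "h \<in> homs S F (dunion D A)"
  shows "h \<in> (\<Union>P\<in>{P. validP S F P}. (\<lambda>(h1,h2). combine S F P h1 h2) `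
     (homs S (restr F P) D \<times> homs S (restr F (adom S F - P)) A))"
proof -
  define P where "P = {x\<in>adom S F. even (h x)}"
  define h1 where "h1 = restrict (\<lambda>x. h x div 2) P"
  define h2 where "h2 = restrict (\<lambda>x. h x div 2) (adom S F - P)"
  have hpi: "h \<in> adom S F \<rightarrow>\<^sub>E adom S (dunion D A)" and
    hf: "\<And>R t. R \<in> S \<Longrightarrow> t \<in> F R \<Longrightarrow> map h t \<in> dunion D A R"
    using h unfolding homs_def by auto
  have cases: "(\<exists>s\<in>D R. map h t = map (\<lambda>x. 2*x) s) \<or> (\<exists>s\<in>A R. map h t = map (\<lambda>x. 2*x+1) s)"
    if "R \<in> S" "t \<in> F R" for R t using hf[OF that] unfolding dunion_def by auto
  have tsub: "set t \<subseteq> adom S F" if "R \<in> S" "t \<in> F R" for R t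
    using that unfolding adom_def by auto
  have valid: "validP S F P"
    unfolding validP_def
  proof (intro conjI ballI)
    show "P \<subseteq> adom S F" unfolding P_def by auto
  next
    fix R t assume Rt: "R \<in> S" "t \<in> F R"
    from cases[OF Rt] show "set t \<subseteq> P \<or> set t \<subseteq> adom S F - P"
    proof
      assume "\<exists>s\<in>D R. map h t = map (\<lambda>x. 2*x) s"
      then obtain s where s: "map h t = map (\<lambda>x. 2*x) s" by blast
      have "set t \<subseteq> P" unfolding P_def using tsub[OF Rt] map_eq_double[OF s] by auto
      then show ?thesis by blast
    next
      assume "\<exists>s\<in>A R. map h t = map (\<lambda>x. 2*x+1) s"
      then obtain s where s: "map h t = map (\<lambda>x. 2*x+1) s" by blast
      have "set t \<subseteq> adom S F - P" unfolding P_def using tsub[OF Rt] map_eq_odd[OF s] by auto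
      then show ?thesis by blast
    qed
  qed
  have adU: "h x \<in> (\<lambda>x. 2*x) ` adom S D \<union> (\<lambda>x. 2*x+1) ` adom S A" if "x \<in> adom S F" for x
    using hpi that unfolding adom_dunion[of S D A] by (auto simp: PiE_def Pi_def)
  have h1h: "h1 \<in> homs S (restr F P) D"
    unfolding homs_def
  proof (intro CollectI conjI ballI)
    show "h1 \<in> adom S (restr F P) \<rightarrow>\<^sub>E adom S D"
      unfolding adom_restr[OF valid]
    proof
      fix x assume "x \<in> P"
      then have "x \<in> adom S F" "even (h x)" unfolding P_def by auto
      moreover from adU[OF \<open>x \<in> adom S F\<close>] have "(\<exists>y\<in>adom S D. h x = 2*y) \<or> (\<exists>y\<in>adom S A. h x = 2*y+1)" by blast
      ultimately obtain y where "y \<in> adom S D" "h x = 2*y" by auto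
      then show "h1 x \<in> adom S D" using \<open>x \<in> P\<close> unfolding h1_def by simp
    qed (auto simp: h1_def)
  next
    fix R t assume R: "R \<in> S" and t: "t \<in> restr F P R"
    then have tF: "t \<in> F R" and tP: "set t \<subseteq> P" unfolding restr_def by auto
    have "t \<noteq> []" using ne R tF by auto
    then obtain x where x: "x \<in> set t" by (cases t) auto
    from cases[OF R tF] show "map h1 t \<in> D R"
    proof
      assume "\<exists>s\<in>D R. map h t = map (\<lambda>x. 2*x) s"
      then obtain s where s: "s \<in> D R" "map h t = map (\<lambda>x. 2*x) s" by blast
      have "map h1 t = map (\<lambda>x. x div 2) (map h t)" using tP unfolding h1_def by (induct t) auto
      also have "\<dots> = s" unfolding s(2) by (simp add: comp_def)
      finally show ?thesis using s by simp
    next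
      assume "\<exists>s\<in>A R. map h t = map (\<lambda>x. 2*x+1) s"
      then obtain s where "map h t = map (\<lambda>x. 2*x+1) s" by blast
      then have "odd (h x)" using map_eq_odd x by metis
      moreover have "even (h x)" using tP x unfolding P_def by auto
      ultimately show ?thesis by simp
    qed
  qed
  have h2h: "h2 \<in> homs S (restr F (adom S F - P)) A"
    unfolding homs_def
  proof (intro CollectI conjI ballI)
    show "h2 \<in> adom S (restr F (adom S F - P)) \<rightarrow>\<^sub>E adom S A"
      unfolding adom_restr[OF validP_compl[OF valid]]
    proof
      fix x assume "x \<in> adom S F - P"
      then have "x \<in> adom S F" "odd (h x)" unfolding P_def by auto
      moreover from adU[OF \<open>x \<in> adom S F\<close>] have "(\<exists>y\<in>adom S D. h x = 2*y) \<or> (\<exists>y\<in>adom S A. h x = 2*y+1)" by blast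
      ultimately obtain y where "y \<in> adom S A" "h x = 2*y+1" by auto
      then show "h2 x \<in> adom S A" using \<open>x \<in> adom S F - P\<close> unfolding h2_def by simp
    qed (auto simp: h2_def)
  next
    fix R t assume R: "R \<in> S" and t: "t \<in> restr F (adom S F - P) R"
    then have tF: "t \<in> F R" and tP: "set t \<subseteq> adom S F - P" unfolding restr_def by auto
    have "t \<noteq> []" using ne R tF by auto
    then obtain x where x: "x \<in> set t" by (cases t) auto
    from cases[OF R tF] show "map h2 t \<in> A R"
    proof
      assume "\<exists>s\<in>A R. map h t = map (\<lambda>x. 2*x+1) s"
      then obtain s where s: "s \<in> A R" "map h t = map (\<lambda>x. 2*x+1) s" by blast
      have "map h2 t = map (\<lambda>x. x div 2) (map h t)" using tP unfolding h2_def by (induct t) auto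
      also have "\<dots> = s" unfolding s(2) by (simp add: comp_def)
      finally show ?thesis using s by simp
    next
      assume "\<exists>s\<in>D R. map h t = map (\<lambda>x. 2*x) s"
      then obtain s where "map h t = map (\<lambda>x. 2*x) s" by blast
      then have "even (h x)" using map_eq_double x by metis
      moreover have "odd (h x)" using tP x unfolding P_def by auto
      ultimately show ?thesis by simp
    qed
  qed
  have "h = combine S F P h1 h2"
  proof
    fix x
    show "h x = combine S F P h1 h2 x"
    proof (cases "x \<in> adom S F")
      case True
      show ?thesis
      proof (cases "even (h x)")
        case True
        then have "x \<in> P" using \<open>x \<in> adom S F\<close> unfolding P_def by auto
        then show ?thesis using True unfolding combine_def h1_def by simp
      next
        case False
        then have "x \<notin> P" unfolding P_def by auto
        then show ?thesis using False \<open>x \<in> adom S F\<close> unfolding combine_def h2_def by simp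
      qed
    next
      case False
      then have "x \<notin> P" unfolding P_def by auto
      have "h x = undefined" using hpi False by (simp add: PiE_def extensional_def)
      then show ?thesis using False \<open>x \<notin> P\<close> unfolding combine_def by simp
    qed
  qed
  moreover have "h \<in> (\<lambda>(h1,h2). combine S F P h1 h2) ` (homs S (restr F P) D \<times> homs S (restr F (adom S F - P)) A)"
    by (rule image_eqI[where x="(h1,h2)"]) (simp_all add: calculation h1h h2h)
  ultimately show ?thesis using valid by (intro UN_I[where a=P]) auto
qed


lemma homs_dunion_sup:
  assumes valid: "validP S F P" and h1: "h1 \<in> homs S (restr F P) D"
    and h2: "h2 \<in> homs S (restr F (adom S F - P)) A"
  shows "combine S F P h1 h2 \<in> homs S F (dunion D A)"
proof -
  have Psub: "P \<subseteq> adom S F" using valid unfolding validP_def by auto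
  have h1pi: "h1 \<in> P \<rightarrow>\<^sub>E adom S D" and h1f: "\<And>R t. R \<in> S \<Longrightarrow> t \<in> restr F P R \<Longrightarrow> map h1 t \<in> D R"
    using h1 adom_restr[OF valid] unfolding homs_def by auto
  have h2pi: "h2 \<in> adom S F - P \<rightarrow>\<^sub>E adom S A"
    and h2f: "\<And>R t. R \<in> S \<Longrightarrow> t \<in> restr F (adom S F - P) R \<Longrightarrow> map h2 t \<in> A R"
    using h2 adom_restr[OF validP_compl[OF valid]] unfolding homs_def by auto
  show ?thesis unfolding homs_def
  proof (intro CollectI conjI ballI)
    show "combine S F P h1 h2 \<in> adom S F \<rightarrow>\<^sub>E adom S (dunion D A)"
    proof
      fix x assume x: "x \<in> adom S F"
      show "combine S F P h1 h2 x \<in> adom S (dunion D A)"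
      proof (cases "x \<in> P")
        case True
        then have "h1 x \<in> adom S D" using h1pi by auto
        then show ?thesis using True unfolding combine_def adom_dunion by auto
      next
        case False
        then have "h2 x \<in> adom S A" using h2pi x by auto
        then show ?thesis using False x unfolding combine_def adom_dunion by auto
      qed
    next
      fix x assume x: "x \<notin> adom S F"
      then have "x \<notin> P" using Psub by auto
      then show "combine S F P h1 h2 x = undefined" using x unfolding combine_def by simp
    qed
  next
    fix R t assume R: "R \<in> S" and t: "t \<in> F R"
    have tsub: "set t \<subseteq> adom S F" using R t unfolding adom_def by auto
    from valid R t have "set t \<subseteq> P \<or> set t \<subseteq> adom S F - P" unfolding validP_def by auto
    then show "map (combine S F P h1 h2) t \<in> dunion D A R"
    proof
      assume tP: "set t \<subseteq> P"
      then have "t \<in> restr F P R" using t unfolding restr_def by auto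
      then have "map h1 t \<in> D R" using h1f R by auto
      moreover have e: "map (combine S F P h1 h2) t = map (\<lambda>x. 2*x) (map h1 t)"
        using tP unfolding combine_def by (induct t) auto
      ultimately show ?thesis unfolding dunion_def e by (intro UnI1 imageI)
    next
      assume tP: "set t \<subseteq> adom S F - P"
      then have "t \<in> restr F (adom S F - P) R" using t unfolding restr_def by auto
      then have "map h2 t \<in> A R" using h2f R by auto
      moreover have e: "map (combine S F P h1 h2) t = map (\<lambda>x. 2*x+1) (map h2 t)"
        using tP unfolding combine_def by (induct t) auto
      ultimately show ?thesis unfolding dunion_def e by (intro UnI2 imageI)
    qed
  qed
qed

lemma homs_dunion_eq:
  assumes ne: "\<forall>R\<in>S. \<forall>t\<in>F R. t \<noteq> []"
  shows "homs S F (dunion D A) = (\<Union>P\<in>{P. validP S F P}. (\<lambda>(h1,h2). combine S F P h1 h2) `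
     (homs S (restr F P) D \<times> homs S (restr F (adom S F - P)) A))"
proof
  show "homs S F (dunion D A) \<subseteq> (\<Union>P\<in>{P. validP S F P}. (\<lambda>(h1,h2). combine S F P h1 h2) `
     (homs S (restr F P) D \<times> homs S (restr F (adom S F - P)) A))" using homs_dunion_sub[OF ne] by blast
next
  show "(\<Union>P\<in>{P. validP S F P}. (\<lambda>(h1,h2). combine S F P h1 h2) `
     (homs S (restr F P) D \<times> homs S (restr F (adom S F - P)) A)) \<subseteq> homs S F (dunion D A)"
    using homs_dunion_sup by fastforce
qed

lemma combine_P: "validP S F P \<Longrightarrow> {x\<in>adom S F. even (combine S F P h1 h2 x)} = P"
  unfolding validP_def combine_def by auto

lemma combine_inj:
  assumes valid: "validP S F P"
  shows "inj_on (\<lambda>(h1,h2). combine S F P h1 h2) (homs S (restr F P) D \<times> homs S (restr F (adom S F - P)) A)"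
proof (rule inj_onI, clarify)
  fix h1 h2 g1 g2
  assume h1: "h1 \<in> homs S (restr F P) D" and h2: "h2 \<in> homs S (restr F (adom S F - P)) A"
    and g1: "g1 \<in> homs S (restr F P) D" and g2: "g2 \<in> homs S (restr F (adom S F - P)) A"
    and eq: "combine S F P h1 h2 = combine S F P g1 g2"
  have e1: "h1 \<in> extensional P" "g1 \<in> extensional P"
    using h1 g1 adom_restr[OF valid] unfolding homs_def by (auto simp: PiE_def)
  have e2: "h2 \<in> extensional (adom S F - P)" "g2 \<in> extensional (adom S F - P)"
    using h2 g2 adom_restr[OF validP_compl[OF valid]] unfolding homs_def by (auto simp: PiE_def)
  show "h1 = g1 \<and> h2 = g2"
  proof
    show "h1 = g1"
    proof
      fix x show "h1 x = g1 x"
      proof (cases "x \<in> P")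
        case True
        then show ?thesis using fun_cong[OF eq, of x] unfolding combine_def by simp
      next
        case False
        then show ?thesis using e1 by (simp add: extensional_def)
      qed
    qed
  next
    show "h2 = g2"
    proof
      fix x show "h2 x = g2 x"
      proof (cases "x \<in> adom S F - P")
        case True
        then show ?thesis using fun_cong[OF eq, of x] unfolding combine_def by simp
      next
        case False
        then show ?thesis using e2 by (simp add: extensional_def)
      qed
    qed
  qed
qed

lemma card_homs_dunion:
  assumes sch: "schema S ar" and F: "is_instance S ar F" and D: "is_instance S ar D"
    and A: "is_instance S ar A"
  shows "card (homs S F (dunion D A)) = (\<Sum>P\<in>{P. validP S F P}.
     card (homs S (restr F P) D) * card (homs S (restr F (adom S F - P)) A))"
proof -
  have ne: "\<forall>R\<in>S. \<forall>t\<in>F R. t \<noteq> []" using nonempty_facts[OF sch F] by blast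
  have finV: "finite {P. validP S F P}"
    by (rule finite_subset[of _ "Pow (adom S F)"]) (auto simp: validP_def finite_adom[OF sch F])
  have finA: "finite (adom S F)" using finite_adom[OF sch F] .
  have fin1: "finite (homs S (restr F P) D)" if "validP S F P" for P
    using finite_homs[of S "restr F P" D] adom_restr[OF that] finite_adom[OF sch D]
      finite_subset[OF _ finA, of P] that unfolding validP_def by auto
  have fin2: "finite (homs S (restr F (adom S F - P)) A)" if "validP S F P" for P
    using finite_homs[of S "restr F (adom S F - P)" A] adom_restr[OF validP_compl[OF that]]
      finite_adom[OF sch A] finA by auto
  have "card (homs S F (dunion D A)) = (\<Sum>P\<in>{P. validP S F P}. card ((\<lambda>(h1,h2). combine S F P h1 h2) `
     (homs S (restr F P) D \<times> homs S (restr F (adom S F - P)) A)))"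
    unfolding homs_dunion_eq[OF ne]
  proof (rule card_UN_disjoint[OF finV])
    show "\<forall>P\<in>{P. validP S F P}. finite ((\<lambda>(h1,h2). combine S F P h1 h2) `
       (homs S (restr F P) D \<times> homs S (restr F (adom S F - P)) A))"
      using fin1 fin2 by auto
  next
    show "\<forall>P\<in>{P. validP S F P}. \<forall>Q\<in>{P. validP S F P}. P \<noteq> Q \<longrightarrow>
       (\<lambda>(h1,h2). combine S F P h1 h2) ` (homs S (restr F P) D \<times> homs S (restr F (adom S F - P)) A) \<inter>
       (\<lambda>(h1,h2). combine S F Q h1 h2) ` (homs S (restr F Q) D \<times> homs S (restr F (adom S F - Q)) A) = {}"
    proof (intro ballI impI)
      fix P Q assume P: "P \<in> {P. validP S F P}" and Q: "Q \<in> {P. validP S F P}" and PQ: "P \<noteq> Q"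
      show "(\<lambda>(h1,h2). combine S F P h1 h2) ` (homs S (restr F P) D \<times> homs S (restr F (adom S F - P)) A) \<inter>
       (\<lambda>(h1,h2). combine S F Q h1 h2) ` (homs S (restr F Q) D \<times> homs S (restr F (adom S F - Q)) A) = {}"
      proof (rule ccontr)
        assume "\<not> ?thesis"
        then obtain h1 h2 g1 g2 where "combine S F P h1 h2 = combine S F Q g1 g2" by auto
        then have "{x\<in>adom S F. even (combine S F P h1 h2 x)} = {x\<in>adom S F. even (combine S F Q g1 g2 x)}"
          by simp
        then show False using combine_P[of S F P] combine_P[of S F Q] P Q PQ by auto
      qed
    qed
  qed
  also have "\<dots> = (\<Sum>P\<in>{P. validP S F P}.
     card (homs S (restr F P) D) * card (homs S (restr F (adom S F - P)) A))"
  proof (rule sum.cong[OF refl])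
    fix P assume "P \<in> {P. validP S F P}"
    then have v: "validP S F P" by simp
    show "card ((\<lambda>(h1,h2). combine S F P h1 h2) ` (homs S (restr F P) D \<times> homs S (restr F (adom S F - P)) A))
      = card (homs S (restr F P) D) * card (homs S (restr F (adom S F - P)) A)"
      by (simp add: card_image[OF combine_inj[OF v]] card_cartesian_product)
  qed
  finally show ?thesis .
qed

lemma exists_homs_dunion:
  assumes sch: "schema S ar" and F: "is_instance S ar F"
  shows "hom_exists S F (dunion D A) \<longleftrightarrow> (\<exists>P. validP S F P \<and> hom_exists S (restr F P) D
     \<and> hom_exists S (restr F (adom S F - P)) A)"
proof -
  have ne: "\<forall>R\<in>S. \<forall>t\<in>F R. t \<noteq> []" using nonempty_facts[OF sch F] by blast
  show ?thesis unfolding hom_exists_def homs_dunion_eq[OF ne] by auto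
qed


lemma dunion_class:
  assumes D: "is_instance S ar D" and A: "is_instance S ar A"
  shows "dunion D A \<in> hom_equiv_class S ar A \<longleftrightarrow> hom_exists S D A"
proof -
  have i: "is_instance S ar (dunion D A)" using dunion_inst[OF D A] .
  have a: "hom_exists S A (dunion D A)"
    unfolding hom_exists_iff
  proof (intro exI[of _ "\<lambda>x. 2*x+1"] ballI)
    fix R t assume "t \<in> A R"
    then show "map (\<lambda>x. 2*x+1) t \<in> dunion D A R" unfolding dunion_def by (intro UnI2 imageI)
  qed
  have "hom_exists S (dunion D A) A \<longleftrightarrow> hom_exists S D A"
  proof
    assume "hom_exists S (dunion D A) A"
    then obtain f where f: "\<forall>R\<in>S. \<forall>t\<in>dunion D A R. map f t \<in> A R" unfolding hom_exists_iff by blast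
    show "hom_exists S D A" unfolding hom_exists_iff
    proof (intro exI[of _ "\<lambda>x. f (2*x)"] ballI)
      fix R t assume R: "R \<in> S" and t: "t \<in> D R"
      have "map (\<lambda>x. 2*x) t \<in> dunion D A R" using t unfolding dunion_def by (intro UnI1 imageI)
      then have "map f (map (\<lambda>x. 2*x) t) \<in> A R" using f R by blast
      then show "map (\<lambda>x. f (2*x)) t \<in> A R" by (simp add: comp_def)
    qed
  next
    assume "hom_exists S D A"
    then obtain g where g: "\<forall>R\<in>S. \<forall>t\<in>D R. map g t \<in> A R" unfolding hom_exists_iff by blast
    show "hom_exists S (dunion D A) A" unfolding hom_exists_iff
    proof (intro exI[of _ "\<lambda>x. if even x then g (x div 2) else x div 2"] ballI)
      fix R t assume R: "R \<in> S" and t: "t \<in> dunion D A R"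
      then consider s where "s \<in> D R" "t = map (\<lambda>x. 2*x) s" | s where "s \<in> A R" "t = map (\<lambda>x. 2*x+1) s"
        unfolding dunion_def by blast
      then show "map (\<lambda>x. if even x then g (x div 2) else x div 2) t \<in> A R"
      proof cases
        case 1
        then show ?thesis using g R by (simp add: comp_def)
      next
        case 2
        then show ?thesis by (simp add: comp_def)
      qed
    qed
  qed
  then show ?thesis using i a unfolding hom_equiv_class_def by auto
qed

definition combK :: "semiringK \<Rightarrow> 'r set \<Rightarrow> 'r inst \<Rightarrow> ('r inst \<Rightarrow> nat) \<Rightarrow> 'r inst \<Rightarrow> nat" where
  "combK K S A v F = (case K of
      KN \<Rightarrow> (\<Sum>P\<in>{P. validP S F P}. v (restr F P) * card (homs S (restr F (adom S F - P)) A))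
    | KB \<Rightarrow> (if \<exists>P. validP S F P \<and> v (restr F P) \<noteq> 0 \<and> hom_exists S (restr F (adom S F - P)) A then 1 else 0))"

lemma combK_cong:
  assumes "\<And>P. validP S F P \<Longrightarrow> v (restr F P) = w (restr F P)"
  shows "combK K S A v F = combK K S A w F"
  using assms unfolding combK_def by (cases K) (auto intro!: sum.cong)

lemma hom_K_dunion:
  assumes sch: "schema S ar" and F: "is_instance S ar F" and D: "is_instance S ar D"
    and A: "is_instance S ar A"
  shows "hom_K K S F (dunion D A) = combK K S A (\<lambda>G. hom_K K S G D) F"
proof (cases K)
  case KN
  then show ?thesis unfolding combK_def hom_K_def using card_homs_dunion[OF sch F D A] by simp
next
  case KB
  then show ?thesis unfolding combK_def hom_K_def using exists_homs_dunion[OF sch F, of D A] by auto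
qed

lemma finite_validP: "schema S ar \<Longrightarrow> is_instance S ar F \<Longrightarrow> finite {P. validP S F P}"
  by (rule finite_subset[of _ "Pow (adom S F)"]) (auto simp: validP_def finite_adom)

lemma validP_full: "validP S F (adom S F)"
  unfolding validP_def adom_def by auto

lemma hom_K_vec_nth: "i < length Gs \<Longrightarrow> hom_K_vec K S Gs D ! i = hom_K K S (Gs ! i) D"
  unfolding hom_K_vec_def by simp

lemma dir2:
  assumes sch: "schema S ar" and A: "is_instance S ar A"
    and lqa: "left_query_algorithm S ar K (hom_equiv_class S ar A) k Fs X" and k: "k > 0"
  shows "admits_left_qa S ar K (CSP S ar A)"
proof -
  have Fs: "length Fs = k" "\<forall>F\<in>set Fs. is_instance S ar F"
    and Fsq: "\<And>D. is_instance S ar D \<Longrightarrow> (D \<in> hom_equiv_class S ar A \<longleftrightarrow> hom_K_vec K S Fs D \<in> X)"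
    using lqa unfolding left_query_algorithm_def by auto
  have fin: "finite (\<Union>F\<in>set Fs. restr F ` {P. validP S F P})"
    using finite_validP[OF sch] Fs(2) by auto
  obtain Gs where Gs: "distinct Gs" "set Gs = (\<Union>F\<in>set Fs. restr F ` {P. validP S F P})"
    using finite_distinct_list[OF fin] by metis
  define lk where "lk G = (SOME i. i < length Gs \<and> Gs ! i = G)" for G
  define gfun where "gfun y = map (\<lambda>F. combK K S A (\<lambda>G. y ! lk G) F) Fs" for y
  define X' where "X' = {y. length y = length Gs \<and> gfun y \<in> X}"
  have lk: "lk G < length Gs \<and> Gs ! lk G = G" if "G \<in> set Gs" for G
  proof -
    have "\<exists>i. i < length Gs \<and> Gs ! i = G" using that by (simp add: in_set_conv_nth)
    then show ?thesis unfolding lk_def by (rule someI_ex)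
  qed
  have key: "gfun (hom_K_vec K S Gs D) = hom_K_vec K S Fs (dunion D A)" if D: "is_instance S ar D" for D
    unfolding gfun_def hom_K_vec_def[of K S Fs]
  proof (rule map_cong[OF refl])
    fix F assume F: "F \<in> set Fs"
    have "combK K S A (\<lambda>G. hom_K_vec K S Gs D ! lk G) F = combK K S A (\<lambda>G. hom_K K S G D) F"
    proof (rule combK_cong)
      fix P assume "validP S F P"
      then have "restr F P \<in> set Gs" using Gs(2) F by auto
      from lk[OF this] show "hom_K_vec K S Gs D ! lk (restr F P) = hom_K K S (restr F P) D"
        by (simp add: hom_K_vec_nth)
    qed
    also have "\<dots> = hom_K K S F (dunion D A)"
      using hom_K_dunion[OF sch _ D A] F Fs(2) by simp
    finally show "combK K S A (\<lambda>G. hom_K_vec K S Gs D ! lk G) F = hom_K K S F (dunion D A)" .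
  qed
  have "Fs \<noteq> []" using Fs(1) k by auto
  then obtain F0 where F0: "F0 \<in> set Fs" by (cases Fs) auto
  then have "restr F0 (adom S F0) \<in> set Gs" using Gs(2) validP_full[of S F0] by auto
  then have len: "length Gs > 0" by (cases Gs) auto
  have "left_query_algorithm S ar K (CSP S ar A) (length Gs) Gs X'"
    unfolding left_query_algorithm_def
  proof (intro conjI allI impI ballI)
    show "distinct Gs" by (rule Gs(1))
  next
    fix G assume "G \<in> set Gs"
    then show "is_instance S ar G" using Gs(2) Fs(2) restr_inst by fastforce
  next
    fix x assume "x \<in> X'" then show "length x = length Gs" unfolding X'_def by simp
  next
    fix D assume D: "is_instance S ar D"
    have "D \<in> CSP S ar A \<longleftrightarrow> hom_exists S D A" using D unfolding CSP_def by simp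
    also have "\<dots> \<longleftrightarrow> dunion D A \<in> hom_equiv_class S ar A" using dunion_class[OF D A] by simp
    also have "\<dots> \<longleftrightarrow> hom_K_vec K S Fs (dunion D A) \<in> X" using Fsq[OF dunion_inst[OF D A]] .
    also have "\<dots> \<longleftrightarrow> hom_K_vec K S Gs D \<in> X'" unfolding X'_def key[OF D, symmetric]
      by (simp add: hom_K_vec_def)
    finally show "D \<in> CSP S ar A \<longleftrightarrow> hom_K_vec K S Gs D \<in> X'" .
  qed simp
  then show ?thesis unfolding admits_left_qa_def using len by blast
qed

lemma dir1:
  assumes sch: "schema S ar" and A: "is_instance S ar A"
    and lqa: "left_query_algorithm S ar K (CSP S ar A) k Fs X"
  shows "admits_left_qa S ar K (hom_equiv_class S ar A)"
proof -
  have Fs: "distinct Fs" "\<forall>F\<in>set Fs. is_instance S ar F"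
    and Fsq: "\<And>D. is_instance S ar D \<Longrightarrow> (D \<in> CSP S ar A \<longleftrightarrow> hom_K_vec K S Fs D \<in> X)"
    using lqa unfolding left_query_algorithm_def by auto
  define Fs' where "Fs' = Fs @ (if A \<in> set Fs then [] else [A])"
  define X' where "X' = {y. length y = length Fs' \<and> take (length Fs) y \<in> X \<and> (\<exists>i<length Fs'. Fs' ! i = A \<and> y ! i \<noteq> 0)}"
  have AF: "A \<in> set Fs'" unfolding Fs'_def by auto
  then have len: "length Fs' > 0" by (cases Fs') auto
  have "left_query_algorithm S ar K (hom_equiv_class S ar A) (length Fs') Fs' X'"
    unfolding left_query_algorithm_def
  proof (intro conjI allI impI ballI)
    show "distinct Fs'" unfolding Fs'_def using Fs(1) by auto
  next
    fix G assume "G \<in> set Fs'"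
    then show "is_instance S ar G" using Fs(2) A unfolding Fs'_def by (auto split: if_splits)
  next
    fix x assume "x \<in> X'" then show "length x = length Fs'" unfolding X'_def by simp
  next
    fix D assume D: "is_instance S ar D"
    have tk: "take (length Fs) (hom_K_vec K S Fs' D) = hom_K_vec K S Fs D"
      unfolding Fs'_def hom_K_vec_def by simp
    have finh: "finite (homs S A D)" using finite_homs finite_adom[OF sch A] finite_adom[OF sch D] by blast
    have ex: "(\<exists>i<length Fs'. Fs' ! i = A \<and> hom_K_vec K S Fs' D ! i \<noteq> 0) \<longleftrightarrow> hom_exists S A D"
    proof
      assume "\<exists>i<length Fs'. Fs' ! i = A \<and> hom_K_vec K S Fs' D ! i \<noteq> 0"
      then obtain i where "i < length Fs'" "Fs' ! i = A" "hom_K_vec K S Fs' D ! i \<noteq> 0" by blast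
      then have "hom_K K S A D \<noteq> 0" by (simp add: hom_K_vec_nth)
      then show "hom_exists S A D" using hom_K_nz[OF finh] by blast
    next
      assume "hom_exists S A D"
      then have "hom_K K S A D \<noteq> 0" using hom_K_nz[OF finh] by blast
      moreover obtain i where "i < length Fs'" "Fs' ! i = A" using AF by (auto simp: in_set_conv_nth)
      ultimately show "\<exists>i<length Fs'. Fs' ! i = A \<and> hom_K_vec K S Fs' D ! i \<noteq> 0"
        by (auto simp: hom_K_vec_nth)
    qed
    have "D \<in> hom_equiv_class S ar A \<longleftrightarrow> D \<in> CSP S ar A \<and> hom_exists S A D"
      unfolding hom_equiv_class_def CSP_def using D by simp
    also have "\<dots> \<longleftrightarrow> hom_K_vec K S Fs D \<in> X \<and> hom_exists S A D" using Fsq[OF D] by simp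
    also have "\<dots> \<longleftrightarrow> hom_K_vec K S Fs' D \<in> X'" unfolding X'_def using tk ex
      by (simp add: hom_K_vec_def)
    finally show "D \<in> hom_equiv_class S ar A \<longleftrightarrow> hom_K_vec K S Fs' D \<in> X'" .
  qed simp
  then show ?thesis unfolding admits_left_qa_def using len by blast
qed

theorem mainTheorem6:
  fixes S :: "'r set" and ar :: "'r \<Rightarrow> nat" and A :: "'r inst" and K :: semiringK
  assumes "schema S ar" and "is_instance S ar A"
  shows "admits_left_qa S ar K (hom_equiv_class S ar A) \<longleftrightarrow> admits_left_qa S ar K (CSP S ar A)"
proof
  assume "admits_left_qa S ar K (hom_equiv_class S ar A)"
  then obtain k Fs X where "k > 0" "left_query_algorithm S ar K (hom_equiv_class S ar A) k Fs X"
    unfolding admits_left_qa_def by blast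
  then show "admits_left_qa S ar K (CSP S ar A)" using dir2[OF assms] by blast
next
  assume "admits_left_qa S ar K (CSP S ar A)"
  then obtain k Fs X where "left_query_algorithm S ar K (CSP S ar A) k Fs X"
    unfolding admits_left_qa_def by blast
  then show "admits_left_qa S ar K (hom_equiv_class S ar A)" using dir1[OF assms] by blast
qed

end
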